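(* Let $\psi$ be admissible, let $Q$ be a $\partial_\psi$-delta operator with $\partial_\psi$-basic polynomial sequence $(p_n)_{n\ge0}$, and let $S\in\Sigma_\psi$ be invertible with $Q=\partial_\psi S$. Then for every $n>0$: (1) $p_n(x)=Q'\,S^{-n-1}x^n$; (2) $p_n(x)=S^{-n}x^n-\frac{n_\psi}{n}\,(S^{-n})'\,x^{n-1}$; (3) $p_n(x)=\frac{n_\psi}{n}\,\hat x_\psi\, S^{-n}x^{n-1}$; (4) $Q'$ is invertible and $p_n(x)=\frac{n_\psi}{n}\,\hat x_\psi\,(Q')^{-1}p_{n-1}(x)$ (the $\psi$-Rodrigues formula).
   Context: $\mathbf F$ is a field of characteristic zero and $P=\mathbf F[x]$; $\mathrm{End}(P)$ is the algebra of linear operators on $P$. An admissible sequence is $\psi=(\psi_n)_{n\ge0}$ with $\psi_n\in\mathbf F$, $\psi_0=1$, $\psi_n\neq0$; $n_\psi=\psi_{n-1}/\psi_n$ ($n\ge1$), $0_\psi=0$, $n_\psi!=n_\psi(n-1)_\psi\cdots1_\psi$, $0_\psi!=1$. The $\psi$-derivative is $\partial_\psi x^n=n_\psi x^{n-1}$. For $y\in\mathbf F$, $E^y(\partial_\psi)=\sum_{k\ge0}\frac{y^k}{k_\psi!}\partial_\psi^{\,k}$. $\Sigma_\psi=\{T\in\mathrm{End}(P):[T,E^\alpha(\partial_\psi)]=0\ \forall\alpha\in\mathbf F\}$. A $\partial_\psi$-delta operator is $Q\in\Sigma_\psi$ with $Q(x)$ a nonzero constant. Its $\partial_\psi$-basic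 polynomial sequence is the sequence $(p_n)_{n\ge0}$ with $\deg p_n=n$, $p_0=1$, $p_n(0)=0$ for $n>0$, and $Qp_n=n_\psi p_{n-1}$. The operator $\hat x_\psi$ is the linear map on $P$ with $\hat x_\psi x^n=\frac{n+1}{(n+1)_\psi}x^{n+1}$ ($n\ge0$). The Pincherle $\psi$-derivative of $T\in\Sigma_\psi$ is $T'=T\hat x_\psi-\hat x_\psi T$. *)

theory Defs
  imports "HOL-Computational_Algebra.Polynomial"
begin

definition lin_op :: "('a::field poly \<Rightarrow> 'a poly) \<Rightarrow> bool" where
  "lin_op T \<longleftrightarrow> (\<forall>p q. T (p + q) = T p + T q) \<and> (\<forall>c p. T (smult c p) = smult c (T p))"

definition admissible :: "(nat \<Rightarrow> 'a::field) \<Rightarrow> bool" where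
  "admissible psi \<longleftrightarrow> psi 0 = 1 \<and> (\<forall>n. psi n \<noteq> 0)"

definition psi_num :: "(nat \<Rightarrow> 'a::field) \<Rightarrow> nat \<Rightarrow> 'a" where
  "psi_num psi n = (if n = 0 then 0 else psi (n - 1) / psi n)"

definition psi_fact :: "(nat \<Rightarrow> 'a::field) \<Rightarrow> nat \<Rightarrow> 'a" where
  "psi_fact psi n = (\<Prod>k\<in>{1..n}. psi_num psi k)"

definition psi_deriv :: "(nat \<Rightarrow> 'a::field) \<Rightarrow> 'a poly \<Rightarrow> 'a poly" where
  "psi_deriv psi p = (\<Sum>k\<le>degree p. monom (psi_num psi k * coeff p k) (k - 1))"

text \<open>E^y(d_psi) = sum_k y^k/k_psi! d_psi^k; on a polynomial p only the
  terms k <= degree p are nonzero, so the sum is finite.\<close>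
definition psi_exp :: "(nat \<Rightarrow> 'a::field) \<Rightarrow> 'a \<Rightarrow> 'a poly \<Rightarrow> 'a poly" where
  "psi_exp psi y p = (\<Sum>k\<le>degree p. smult (y ^ k / psi_fact psi k) ((psi_deriv psi ^^ k) p))"

definition Sigma_psi :: "(nat \<Rightarrow> 'a::field) \<Rightarrow> ('a poly \<Rightarrow> 'a poly) set" where
  "Sigma_psi psi = {T. lin_op T \<and> (\<forall>\<alpha>. T \<circ> psi_exp psi \<alpha> = psi_exp psi \<alpha> \<circ> T)}"

definition psi_delta :: "(nat \<Rightarrow> 'a::field) \<Rightarrow> ('a poly \<Rightarrow> 'a poly) \<Rightarrow> bool" where
  "psi_delta psi Q \<longleftrightarrow> Q \<in> Sigma_psi psi \<and> (\<exists>c. c \<noteq> 0 \<and> Q [:0, 1:] = [:c:])"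

definition psi_basic_seq :: "(nat \<Rightarrow> 'a::field) \<Rightarrow> ('a poly \<Rightarrow> 'a poly) \<Rightarrow> (nat \<Rightarrow> 'a poly) \<Rightarrow> bool" where
  "psi_basic_seq psi Q p \<longleftrightarrow>
     (\<forall>n. degree (p n) = n) \<and> p 0 = 1 \<and> (\<forall>n>0. poly (p n) 0 = 0) \<and>
     (\<forall>n>0. Q (p n) = smult (psi_num psi n) (p (n - 1)))"

definition xhat :: "(nat \<Rightarrow> 'a::field) \<Rightarrow> 'a poly \<Rightarrow> 'a poly" where
  "xhat psi p = (\<Sum>k\<le>degree p. monom (of_nat (k + 1) / psi_num psi (k + 1) * coeff p k) (k + 1))"

definition pincherle :: "(nat \<Rightarrow> 'a::field) \<Rightarrow> ('a poly \<Rightarrow> 'a poly) \<Rightarrow> 'a poly \<Rightarrow> 'a poly" where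
  "pincherle psi T = (\<lambda>p. T (xhat psi p) - xhat psi (T p))"

end

theory Submission
  imports Defs
begin

lemma coeff_D: "coeff (psi_deriv psi p) k = psi_num psi (k+1) * coeff p (k+1)"
proof -
  have "coeff (psi_deriv psi p) k = (\<Sum>j\<le>degree p. (if j = k+1 then psi_num psi j * coeff p j else 0))"
    unfolding psi_deriv_def coeff_sum coeff_monom
    by (rule sum.cong) (auto simp: psi_num_def)
  also have "\<dots> = psi_num psi (k+1) * coeff p (k+1)"
    by (auto simp: coeff_eq_0)
  finally show ?thesis .
qed

lemma coeff_X: "coeff (xhat psi p) k = (if k = 0 then 0 else of_nat k / psi_num psi k * coeff p (k-1))"
proof (cases k)
  case 0 then show ?thesis unfolding xhat_def coeff_sum coeff_monom by simp
next
  case (Suc m)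
  have "coeff (xhat psi p) k = (\<Sum>j\<le>degree p. (if j = m then of_nat (m + 1) / psi_num psi (m + 1) * coeff p m else 0))"
    unfolding xhat_def coeff_sum coeff_monom Suc
    by (rule sum.cong) auto
  also have "\<dots> = of_nat (m + 1) / psi_num psi (m + 1) * coeff p m"
    by (auto simp: coeff_eq_0)
  finally show ?thesis using Suc by simp
qed

lemma lin_D: "lin_op (psi_deriv psi)"
  unfolding lin_op_def by (auto simp: poly_eq_iff coeff_D algebra_simps)

lemma lin_X: "lin_op (xhat psi)"
  unfolding lin_op_def by (auto simp: poly_eq_iff coeff_X algebra_simps)

lemma lin_add: "lin_op T \<Longrightarrow> T (p + q) = T p + T q" unfolding lin_op_def by blast
lemma lin_smult: "lin_op T \<Longrightarrow> T (smult c p) = smult c (T p)" unfolding lin_op_def by blast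
lemma lin_zero: "lin_op T \<Longrightarrow> T 0 = 0" using lin_smult[of T 0 0] by simp
lemma lin_minus: "lin_op T \<Longrightarrow> T (- p) = - T p" using lin_smult[of T "-1" p] by simp
lemma lin_diff: "lin_op T \<Longrightarrow> T (p - q) = T p - T q"
  using lin_add[of T p "-q"] lin_minus[of T q] by simp
lemma lin_sum: "lin_op T \<Longrightarrow> T (sum f A) = (\<Sum>a\<in>A. T (f a))"
  by (induction A rule: infinite_finite_induct) (auto simp: lin_zero lin_add)

lemma lin_comp: "lin_op T \<Longrightarrow> lin_op U \<Longrightarrow> lin_op (T \<circ> U)"
  unfolding lin_op_def by simp
lemma lin_id: "lin_op id" unfolding lin_op_def by simp
lemma lin_pow: "lin_op T \<Longrightarrow> lin_op (T ^^ n)"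
  by (induction n) (auto simp: lin_id lin_comp)

lemma lin_expand: assumes "lin_op T" "degree p \<le> N"
  shows "T p = (\<Sum>k\<le>N. smult (coeff p k) (T (monom 1 k)))"
proof -
  have "T p = T (\<Sum>k\<le>N. smult (coeff p k) (monom 1 k))"
    using poly_as_sum_of_monoms'[OF assms(2)] by (simp add: smult_monom)
  also have "\<dots> = (\<Sum>k\<le>N. smult (coeff p k) (T (monom 1 k)))"
    using assms(1) by (simp add: lin_sum lin_smult)
  finally show ?thesis .
qed

lemma DX: "psi_deriv psi (xhat psi p) = xhat psi (psi_deriv psi p) + p"
  if "admissible psi"
proof -
  have nz: "psi_num psi (Suc k) \<noteq> 0" for k using that by (simp add: admissible_def psi_num_def)
  have nz': "k > 0 \<Longrightarrow> psi_num psi k \<noteq> 0" for k using that by (simp add: admissible_def psi_num_def)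
  show ?thesis
    by (auto simp: poly_eq_iff coeff_D coeff_X nz nz' field_simps of_nat_Suc)
qed


context
  fixes psi :: "nat \<Rightarrow> 'a::field_char_0"
  assumes adm: "admissible psi"
begin

abbreviation "D \<equiv> psi_deriv psi"
abbreviation "X \<equiv> xhat psi"

definition C :: "('a poly \<Rightarrow> 'a poly) \<Rightarrow> bool" where
  "C T \<longleftrightarrow> lin_op T \<and> (\<forall>p. T (D p) = D (T p))"

lemma nz: "k > 0 \<Longrightarrow> psi_num psi k \<noteq> 0"
  using adm by (simp add: admissible_def psi_num_def)

lemma nf_nz: "psi_fact psi k \<noteq> 0"
  unfolding psi_fact_def using nz by (auto simp: prod_zero_iff)

lemma D_zero_iff: "D p = 0 \<longleftrightarrow> degree p = 0"
proof
  assume "D p = 0"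
  then have "coeff p (k+1) = 0" for k using nz[of "k+1"] by (metis coeff_D coeff_0 mult_eq_0_iff zero_less_Suc Suc_eq_plus1)
  then show "degree p = 0" by (metis Suc_eq_plus1 degree_le gr0_implies_Suc le_zero_eq)
next
  assume "degree p = 0"
  then show "D p = 0" by (auto simp: poly_eq_iff coeff_D coeff_eq_0)
qed

lemma coeff_Dpow: "coeff ((D ^^ k) p) j = (\<Prod>i\<in>{1..k}. psi_num psi (j+i)) * coeff p (j+k)"
proof (induction k arbitrary: p)
  case 0 then show ?case by simp
next
  case (Suc k)
  have "coeff ((D ^^ Suc k) p) j = coeff ((D ^^ k) (D p)) j" by (simp add: funpow_Suc_right del: funpow.simps)
  also have "\<dots> = (\<Prod>i\<in>{1..k}. psi_num psi (j+i)) * (psi_num psi (j+k+1) * coeff p (j+k+1))"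
    using Suc by (simp add: coeff_D)
  also have "\<dots> = (\<Prod>i\<in>{1..Suc k}. psi_num psi (j+i)) * coeff p (j + Suc k)"
    by (simp add: prod.nat_ivl_Suc')
  finally show ?case .
qed

lemma nf_add: "psi_fact psi (m + k) = psi_fact psi m * (\<Prod>i\<in>{1..k}. psi_num psi (m+i))"
proof (induction k)
  case 0 then show ?case by simp
next
  case (Suc k)
  then show ?case by (simp add: psi_fact_def prod.nat_ivl_Suc' del: add_Suc_right)
    (simp add: prod.nat_ivl_Suc' add_Suc_right)
qed

lemma Dpow_zero: "degree p < k \<Longrightarrow> (D ^^ k) p = 0"
  by (auto simp: poly_eq_iff coeff_Dpow coeff_eq_0)

lemma C_D: "C D" unfolding C_def by (simp add: lin_D)
lemma C_id: "C id" unfolding C_def by (simp add: lin_id)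
lemma C_comp: "C T \<Longrightarrow> C U \<Longrightarrow> C (T \<circ> U)" unfolding C_def by (simp add: lin_comp)
lemma C_pow: "C T \<Longrightarrow> C (T ^^ n)"
  by (induction n) (auto simp: C_id C_comp)
lemma C_lin: "C T \<Longrightarrow> lin_op T" unfolding C_def by simp
lemma C_commD: "C T \<Longrightarrow> T (D p) = D (T p)" unfolding C_def by simp
lemma C_commDpow: "C T \<Longrightarrow> T ((D ^^ k) p) = (D ^^ k) (T p)"
  by (induction k) (auto simp: C_commD)

lemma C_inv: assumes "C S" "bij S" shows "C (inv S)"
proof -
  have inj: "inj S" using assms(2) bij_is_inj by blast
  have si: "S (inv S p) = p" for p using assms(2) by (simp add: bij_is_surj surj_f_inv_f)
  have l: "lin_op S" using assms(1) C_lin by blast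
  have "lin_op (inv S)" unfolding lin_op_def
  proof (intro conjI allI)
    fix p q show "inv S (p + q) = inv S p + inv S q"
      using inj si lin_add[OF l] by (metis injD)
  next
    fix c p show "inv S (smult c p) = smult c (inv S p)"
      using inj si lin_smult[OF l] by (metis injD)
  qed
  moreover have "inv S (D p) = D (inv S p)" for p
    using inj si C_commD[OF assms(1)] by (metis injD)
  ultimately show ?thesis unfolding C_def by blast
qed

lemma C_pincherle: assumes "C T" shows "C (pincherle psi T)"
proof -
  have l: "lin_op T" using assms C_lin by blast
  have lx: "lin_op X" by (rule lin_X)
  have "lin_op (pincherle psi T)" unfolding lin_op_def pincherle_def
    by (simp add: lin_add[OF l] lin_add[OF lx] lin_smult[OF l] lin_smult[OF lx] smult_diff_right)
  moreover have "pincherle psi T (D p) = D (pincherle psi T p)" for p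
  proof -
    have "D (pincherle psi T p) = D (T (X p)) - D (X (T p))"
      unfolding pincherle_def by (rule lin_diff[OF lin_D])
    also have "\<dots> = T (D (X p)) - (X (D (T p)) + T p)"
      using C_commD[OF assms, of "X p"] DX[OF adm, of "T p"] by simp
    also have "\<dots> = T (X (D p)) + T p - (X (T (D p)) + T p)"
      using C_commD[OF assms, of p] DX[OF adm, of p] lin_add[OF l] by simp
    finally show ?thesis unfolding pincherle_def by simp
  qed
  ultimately show ?thesis unfolding C_def by blast
qed

lemma psi_exp_ext: assumes "degree p \<le> N"
  shows "psi_exp psi a p = (\<Sum>k\<le>N. smult (a ^ k / psi_fact psi k) ((D ^^ k) p))"
  unfolding psi_exp_def
  by (rule sum.mono_neutral_left) (use assms Dpow_zero in auto)

lemma Sigma_C: assumes "T \<in> Sigma_psi psi" shows "C T"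
proof -
  have l: "lin_op T" and cm: "\<And>a q. T (psi_exp psi a q) = psi_exp psi a (T q)"
    using assms unfolding Sigma_psi_def by (auto simp: fun_eq_iff)
  have "T (D p) = D (T p)" for p
  proof (cases "max (degree p) (degree (T p)) = 0")
    case True
    then have "D p = 0" "D (T p) = 0" using D_zero_iff by auto
    then show ?thesis using lin_zero[OF l] by simp
  next
    case False
    define N where "N = max (degree p) (degree (T p))"
    define w where "w k = smult (1 / psi_fact psi k) (T ((D ^^ k) p) - (D ^^ k) (T p))" for k
    have "(\<Sum>k\<le>N. smult (a ^ k) (w k)) = 0" for a
    proof -
      have "T (psi_exp psi a p) = psi_exp psi a (T p)" by (rule cm)
      moreover have "T (psi_exp psi a p) = (\<Sum>k\<le>N. smult (a ^ k / psi_fact psi k) (T ((D ^^ k) p)))"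
        by (subst psi_exp_ext[of p N a]) (auto simp: N_def lin_sum[OF l] lin_smult[OF l])
      moreover have "psi_exp psi a (T p) = (\<Sum>k\<le>N. smult (a ^ k / psi_fact psi k) ((D ^^ k) (T p)))"
        by (rule psi_exp_ext) (simp add: N_def)
      ultimately have "(\<Sum>k\<le>N. smult (a ^ k / psi_fact psi k) (T ((D ^^ k) p))) =
                 (\<Sum>k\<le>N. smult (a ^ k / psi_fact psi k) ((D ^^ k) (T p)))"
        by simp
      moreover have "(\<Sum>k\<le>N. smult (a ^ k) (w k)) = (\<Sum>k\<le>N. smult (a ^ k / psi_fact psi k) (T ((D ^^ k) p))) -
                 (\<Sum>k\<le>N. smult (a ^ k / psi_fact psi k) ((D ^^ k) (T p)))"
        unfolding w_def sum_subtractf[symmetric] by (rule sum.cong) (simp_all add: smult_diff_right)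
      ultimately show ?thesis by simp
    qed
    moreover have "poly (\<Sum>k\<le>N. monom (coeff (w k) j) k) a = coeff (\<Sum>k\<le>N. smult (a ^ k) (w k)) j" for a j
      by (simp add: poly_sum poly_monom coeff_sum mult.commute)
    ultimately have "poly (\<Sum>k\<le>N. monom (coeff (w k) j) k) a = 0" for a j
      by simp
    then have "(\<Sum>k\<le>N. monom (coeff (w k) j) k) = 0" for j
      using poly_all_0_iff_0 by blast
    then have "coeff (\<Sum>k\<le>N. monom (coeff (w k) j) k) 1 = 0" for j by simp
    then have "coeff (w 1) j = 0" for j
      using False by (simp add: coeff_sum N_def)
    then have "w 1 = 0" by (simp add: poly_eq_iff)
    moreover have "psi_fact psi 1 \<noteq> 0" by (rule nf_nz)
    ultimately show ?thesis by (simp add: w_def)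
  qed
  then show ?thesis using l unfolding C_def by blast
qed


lemma nf0: "psi_fact psi 0 = 1" by (simp add: psi_fact_def)

lemma monom_lin: "lin_op T \<Longrightarrow> T (monom c m) = smult c (T (monom 1 m))"
  by (metis lin_smult smult_monom mult.right_neutral)

lemma Dpow_monom: "(D ^^ k) (monom 1 n) = (if k \<le> n then monom (\<Prod>i\<in>{1..k}. psi_num psi (n-k+i)) (n-k) else 0)"
  by (auto simp: poly_eq_iff coeff_Dpow coeff_monom)

lemma coeff_C: assumes "C T"
  shows "coeff (T (monom 1 n)) k = (if k \<le> n then psi_fact psi n / (psi_fact psi k * psi_fact psi (n-k)) * coeff (T (monom 1 (n-k))) 0 else 0)"
proof -
  have l: "lin_op T" using assms C_lin by blast
  have "psi_fact psi k * coeff (T (monom 1 n)) k = coeff ((D^^k) (T (monom 1 n))) 0"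
    by (simp add: coeff_Dpow psi_fact_def)
  also have "\<dots> = coeff (T ((D^^k) (monom 1 n))) 0" by (simp add: C_commDpow[OF assms])
  also have "\<dots> = (if k \<le> n then (\<Prod>i\<in>{1..k}. psi_num psi (n-k+i)) * coeff (T (monom 1 (n-k))) 0 else 0)"
  proof (cases "k \<le> n")
    case True
    show ?thesis unfolding Dpow_monom if_P[OF True]
      monom_lin[OF l, of "\<Prod>i\<in>{1..k}. psi_num psi (n-k+i)" "n-k"] coeff_smult by simp
  next
    case False
    show ?thesis unfolding Dpow_monom using False by (simp add: lin_zero[OF l])
  qed
  also have "\<dots> = (if k \<le> n then psi_fact psi n / psi_fact psi (n-k) * coeff (T (monom 1 (n-k))) 0 else 0)"
    using nf_add[of "n-k" k] nf_nz[of "n-k"] by (auto simp: field_simps)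
  finally show ?thesis using nf_nz[of k] nf_nz[of "n-k"] by (auto simp: field_simps)
qed

lemma degree_C: assumes "C T" shows "degree (T (monom 1 n)) \<le> n"
proof (rule degree_le, intro allI impI)
  fix k assume "n < k"
  then show "coeff (T (monom 1 n)) k = 0" using coeff_C[OF assms, of n k] by simp
qed

lemma C_eq: assumes "C T" "C U" "\<And>n. coeff (T (monom 1 n)) 0 = coeff (U (monom 1 n)) 0"
  shows "T p = U p"
proof -
  have m: "T (monom 1 n) = U (monom 1 n)" for n
    unfolding poly_eq_iff
  proof
    fix k show "coeff (T (monom 1 n)) k = coeff (U (monom 1 n)) k"
      using coeff_C[OF assms(1), of n k] coeff_C[OF assms(2), of n k] assms(3)[of "n-k"] by simp
  qed
  show ?thesis
    using lin_expand[OF C_lin[OF assms(1)], of p "degree p"] lin_expand[OF C_lin[OF assms(2)], of p "degree p"] m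
    by simp
qed

lemma eps_comp: assumes "C T" "C U"
  shows "coeff (T (U (monom 1 n))) 0 = (\<Sum>k\<in>{0..n}. psi_fact psi n / (psi_fact psi k * psi_fact psi (n-k))
           * coeff (U (monom 1 (n-k))) 0 * coeff (T (monom 1 k)) 0)"
proof -
  have "T (U (monom 1 n)) = (\<Sum>k\<le>n. smult (coeff (U (monom 1 n)) k) (T (monom 1 k)))"
    by (rule lin_expand[OF C_lin[OF assms(1)] degree_C[OF assms(2)]])
  then have "coeff (T (U (monom 1 n))) 0 = (\<Sum>k\<le>n. coeff (U (monom 1 n)) k * coeff (T (monom 1 k)) 0)"
    by (simp add: coeff_sum)
  also have "\<dots> = (\<Sum>k\<in>{0..n}. psi_fact psi n / (psi_fact psi k * psi_fact psi (n-k))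
           * coeff (U (monom 1 (n-k))) 0 * coeff (T (monom 1 k)) 0)"
    unfolding atMost_atLeast0
    apply (rule sum.cong[OF refl])
    subgoal for k using coeff_C[OF assms(2), of n k] by simp
    done
  finally show ?thesis .
qed

lemma C_comm: assumes "C T" "C U" shows "T (U p) = U (T p)"
proof -
  have e: "coeff ((T \<circ> U) (monom 1 n)) 0 = coeff ((U \<circ> T) (monom 1 n)) 0" for n
  proof -
    have "coeff ((T \<circ> U) (monom 1 n)) 0 = (\<Sum>k\<in>{0..n}. psi_fact psi n / (psi_fact psi k * psi_fact psi (n-k))
           * coeff (U (monom 1 (n-k))) 0 * coeff (T (monom 1 k)) 0)"
      using eps_comp[OF assms] by simp
    also have "\<dots> = (\<Sum>k\<in>{0..n}. psi_fact psi n / (psi_fact psi (n-k) * psi_fact psi (n-(n-k)))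
           * coeff (U (monom 1 (n-(n-k)))) 0 * coeff (T (monom 1 (n-k))) 0)"
      by (subst sum.atLeastAtMost_rev) simp
    also have "\<dots> = (\<Sum>k\<in>{0..n}. psi_fact psi n / (psi_fact psi k * psi_fact psi (n-k))
           * coeff (T (monom 1 (n-k))) 0 * coeff (U (monom 1 k)) 0)"
      by (rule sum.cong) (simp_all add: mult_ac)
    also have "\<dots> = coeff ((U \<circ> T) (monom 1 n)) 0"
      using eps_comp[OF assms(2,1)] by simp
    finally show ?thesis .
  qed
  have "(T \<circ> U) p = (U \<circ> T) p"
    using C_eq[of "T \<circ> U" "U \<circ> T", OF C_comp[OF assms] C_comp[OF assms(2,1)] e] .
  then show ?thesis by simp
qed

lemma C_const: assumes "C T" shows "degree (T 1) = 0"
proof -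
  have "D (T 1) = T (D 1)" using C_commD[OF assms, of 1] by simp
  also have "D 1 = 0" using D_zero_iff[of 1] by simp
  finally have "D (T 1) = 0" using lin_zero[OF C_lin[OF assms]] by simp
  then show ?thesis using D_zero_iff by blast
qed

lemma C_bij: assumes "C T" "coeff (T 1) 0 \<noteq> 0" shows "bij T"
proof -
  define c where "c = coeff (T 1) 0"
  have l: "lin_op T" using assms C_lin by blast
  obtain a0 where a0: "T 1 = [:a0:]" using C_const[OF assms(1)] degree_eq_zeroE by blast
  have T1: "T (monom 1 0) = [:c:]" using a0 by (simp add: c_def monom_0 one_pCons[symmetric])
  have top: "coeff (T (monom a n)) n = a * c" for a n
    using coeff_C[OF assms(1), of n n] T1 by (simp add: monom_lin[OF l, of a n] c_def nf_nz nf0)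
  have above: "k > n \<Longrightarrow> coeff (T (monom a n)) k = 0" for a n k
    using coeff_C[OF assms(1), of n k] by (simp add: monom_lin[OF l, of a n])
  have cnz: "c \<noteq> 0" using assms(2) c_def by simp
  have deg: "coeff (T p) (degree p) = lead_coeff p * c \<and> (\<forall>k>degree p. coeff (T p) k = 0)" for p
  proof -
    have "T p = (\<Sum>j\<le>degree p. smult (coeff p j) (T (monom 1 j)))"
      using lin_expand[OF l, of p "degree p"] by simp
    then have e: "coeff (T p) k = (\<Sum>j\<le>degree p. coeff p j * coeff (T (monom 1 j)) k)" for k
      by (simp add: coeff_sum)
    have "coeff (T p) (degree p) = (\<Sum>j\<le>degree p. if j = degree p then lead_coeff p * c else 0)"
      unfolding e by (rule sum.cong) (auto simp: top[of 1, simplified] above[where a=1, simplified])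
    moreover have "k > degree p \<Longrightarrow> coeff (T p) k = 0" for k
      unfolding e by (rule sum.neutral) (auto simp: above[where a=1, simplified])
    ultimately show ?thesis by simp
  qed
  have inj: "inj T"
  proof (rule injI)
    fix p q assume "T p = T q"
    then have "T (p - q) = 0" by (simp add: lin_diff[OF l])
    then have "lead_coeff (p - q) * c = 0" using deg[of "p - q"] by (simp del: lead_coeff_minus coeff_diff)
    then have "lead_coeff (p - q) = 0" using cnz by simp
    then show "p = q" by (simp del: lead_coeff_minus coeff_diff)
  qed
  have sj: "\<forall>y. degree y \<le> d \<longrightarrow> (\<exists>z. T z = y)" for d
  proof (induction d)
    case 0
    show ?case
    proof (intro allI impI)
      fix y :: "'a poly" assume "degree y \<le> 0"
      then obtain b where "y = [:b:]" using degree_eq_zeroE by blast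
      then have "y = [:coeff y 0:]" by simp
      moreover have "T (monom (coeff y 0 / c) 0) = [:coeff y 0:]"
        using T1 cnz monom_lin[OF l, of "coeff y 0 / c" 0] by simp
      ultimately show "\<exists>z. T z = y" by metis
    qed
  next
    case (Suc d)
    show ?case
    proof (intro allI impI)
      fix y :: "'a poly" assume dy: "degree y \<le> Suc d"
      define m where "m = monom (coeff y (Suc d) / c) (Suc d)"
      define y' where "y' = y - T m"
      have "degree y' \<le> d"
      proof (rule degree_le, intro allI impI)
        fix k assume "k > d"
        then consider "k = Suc d" | "k > Suc d" by linarith
        then show "coeff y' k = 0"
        proof cases
          case 1
          have "coeff (T m) (Suc d) = coeff y (Suc d) / c * c" unfolding m_def by (rule top)
          then show ?thesis using cnz 1 unfolding y'_def coeff_diff by simp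
        next
          case 2
          have "coeff (T m) k = 0" unfolding m_def using 2 by (rule above)
          moreover have "coeff y k = 0" using dy 2 by (intro coeff_eq_0) simp
          ultimately show ?thesis unfolding y'_def coeff_diff by simp
        qed
      qed
      then obtain z where "T z = y'" using Suc by blast
      then have "T (z + m) = y" by (simp add: lin_add[OF l] y'_def)
      then show "\<exists>z. T z = y" by blast
    qed
  qed
  have "surj T" unfolding surj_def
  proof
    fix y :: "'a poly"
    obtain z where "T z = y" using sj[of "degree y"] by blast
    then show "\<exists>x. y = T x" by metis
  qed
  with inj show ?thesis by (simp add: bij_def)
qed


lemma main:
  fixes Q S :: "'a poly \<Rightarrow> 'a poly" and p :: "nat \<Rightarrow> 'a poly"
  assumes bs: "psi_basic_seq psi Q p"
    and SS: "S \<in> Sigma_psi psi" and bS: "bij S"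
    and QDS: "Q = psi_deriv psi \<circ> S"
  shows "(\<forall>n>0.
      p n = pincherle psi Q ((inv S ^^ (n + 1)) (monom 1 n)) \<and>
      p n = (inv S ^^ n) (monom 1 n)
            - smult (psi_num psi n / of_nat n) (pincherle psi (inv S ^^ n) (monom 1 (n - 1))) \<and>
      p n = smult (psi_num psi n / of_nat n) (xhat psi ((inv S ^^ n) (monom 1 (n - 1)))))
    \<and> bij (pincherle psi Q)
    \<and> (\<forall>n>0. p n = smult (psi_num psi n / of_nat n)
                       (xhat psi (inv (pincherle psi Q) (p (n - 1)))))"
proof -
  define R where "R = inv S"
  define S' where "S' = pincherle psi S"
  define Q' where "Q' = pincherle psi Q"
  have CS: "C S" using Sigma_C[OF SS] .
  have CR: "C R" unfolding R_def using C_inv[OF CS bS] .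
  have CRn: "C (R ^^ n)" for n using C_pow[OF CR] .
  have CS': "C S'" unfolding S'_def using C_pincherle[OF CS] .
  have CQ: "C Q" unfolding QDS using C_comp[OF C_D CS] .
  have CQ': "C Q'" unfolding Q'_def using C_pincherle[OF CQ] .
  have lS: "lin_op S" using C_lin[OF CS] .
  have lR: "lin_op R" using C_lin[OF CR] .
  have lRn: "lin_op (R^^n)" for n using C_lin[OF CRn] .
  have lS': "lin_op S'" using C_lin[OF CS'] .
  have lQ: "lin_op Q" using C_lin[OF CQ] .
  have lQ': "lin_op Q'" using C_lin[OF CQ'] .
  have RS: "R (S x) = x" for x unfolding R_def using bS by (simp add: bij_is_inj)
  have SR: "S (R x) = x" for x unfolding R_def using bS by (simp add: bij_is_surj surj_f_inv_f)
  have RnS: "(R ^^ Suc n) (S x) = (R ^^ n) x" for n x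
    by (simp add: funpow_Suc_right RS del: funpow.simps)
  have SRn: "S ((R ^^ Suc n) x) = (R ^^ n) x" for n x
    by (simp add: SR)
  have Qeq: "Q x = D (S x)" for x unfolding QDS by simp
  have Q'eq: "Q' x = S x + D (S' x)" for x
  proof -
    have "D (S' x) = D (S (X x)) - D (X (S x))" unfolding S'_def pincherle_def by (rule lin_diff[OF lin_D])
    also have "\<dots> = D (S (X x)) - X (D (S x)) - S x" using DX[OF adm, of "S x"] by simp
    finally show ?thesis unfolding Q'_def pincherle_def QDS by simp
  qed
  have R'eq: "pincherle psi R y = - R (R (S' y))" for y
  proof -
    define v where "v = R y"
    have y: "y = S v" unfolding v_def using SR by simp
    have "X (S v) = S (X v) - S' v" unfolding S'_def pincherle_def by simp
    then have "R (X (S v)) = X v - R (S' v)" using RS lin_diff[OF lR] by simp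
    then have "pincherle psi R y = - R (S' v)" unfolding pincherle_def using y RS by simp
    also have "S' v = R (S' y)" unfolding v_def by (rule C_comm[OF CS' CR])
    finally show ?thesis .
  qed
  have Rn': "pincherle psi (R ^^ m) y = - smult (of_nat m) ((R ^^ Suc m) (S' y))" for m y
  proof (induction m arbitrary: y)
    case 0 then show ?case by (simp add: pincherle_def)
  next
    case (Suc m)
    have "pincherle psi (R ^^ Suc m) y = R (pincherle psi (R^^m) y) + pincherle psi R ((R^^m) y)"
      unfolding pincherle_def using lin_diff[OF lR, of "(R^^m) (X y)" "X ((R^^m) y)"] by simp
    also have "\<dots> = R (- smult (of_nat m) ((R ^^ Suc m) (S' y))) - R (R (S' ((R^^m) y)))"
      using Suc R'eq by simp
    also have "S' ((R^^m) y) = (R^^m) (S' y)" by (rule C_comm[OF CS' CRn])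
    also have "R (- smult (of_nat m) ((R ^^ Suc m) (S' y))) = - smult (of_nat m) ((R ^^ Suc (Suc m)) (S' y))"
      using lin_minus[OF lR] lin_smult[OF lR] by simp
    finally have e: "pincherle psi (R ^^ Suc m) y = - smult (of_nat m) ((R ^^ Suc (Suc m)) (S' y)) - R (R ((R ^^ m) (S' y)))" .
    show ?case unfolding e by (simp add: smult_add_left)
  qed
  define q where "q n = Q' ((R ^^ (n+1)) (monom 1 n))" for n
  have Dmon: "D (monom 1 n) = smult (psi_num psi n) (monom 1 (n-1))" for n
    by (simp add: poly_eq_iff coeff_D coeff_monom smult_monom) (auto simp: coeff_monom psi_num_def)
  have Xmon: "X (monom 1 m) = smult (of_nat (Suc m) / psi_num psi (Suc m)) (monom 1 (Suc m))" for m
    by (auto simp: poly_eq_iff coeff_X coeff_monom)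
  have q2: "q n = (R^^n) (monom 1 n) - smult (psi_num psi n / of_nat n) (pincherle psi (R^^n) (monom 1 (n-1)))"
    if "n > 0" for n
  proof -
    have n0: "(of_nat n :: 'a) \<noteq> 0" using that by simp
    have "q n = (R^^n) (monom 1 n) + D (S' ((R^^(Suc n)) (monom 1 n)))"
      unfolding q_def Q'eq using SRn by simp
    also have "D (S' ((R^^(Suc n)) (monom 1 n))) = smult (psi_num psi n) ((R^^(Suc n)) (S' (monom 1 (n-1))))"
    proof -
      have "D (S' ((R^^(Suc n)) (monom 1 n))) = D ((R^^(Suc n)) (S' (monom 1 n)))"
        by (subst C_comm[OF CS' CRn]) (rule refl)
      also have "\<dots> = (R^^(Suc n)) (S' (D (monom 1 n)))"
        by (simp only: C_commD[OF CRn] C_commD[OF CS'])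
      also have "\<dots> = smult (psi_num psi n) ((R^^(Suc n)) (S' (monom 1 (n-1))))"
        unfolding Dmon by (simp only: lin_smult[OF lS'] lin_smult[OF lRn])
      finally show ?thesis .
    qed
    also have "\<dots> = - smult (psi_num psi n / of_nat n) (pincherle psi (R^^n) (monom 1 (n-1)))"
      unfolding Rn' using n0 by simp
    finally show ?thesis by simp
  qed
  have q3: "q n = smult (psi_num psi n / of_nat n) (X ((R^^n) (monom 1 (n-1))))"
    if "n > 0" for n
  proof -
    have n0: "(of_nat n :: 'a) \<noteq> 0" using that by simp
    have pn: "psi_num psi n \<noteq> 0" using nz that by blast
    have Xm: "X (monom 1 (n-1)) = smult (of_nat n / psi_num psi n) (monom 1 n)"
      using Xmon[of "n-1"] that by simp
    have "pincherle psi (R^^n) (monom 1 (n-1)) = smult (of_nat n / psi_num psi n) ((R^^n) (monom 1 n)) - X ((R^^n) (monom 1 (n-1)))"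
      unfolding pincherle_def Xm lin_smult[OF lRn] ..
    then show ?thesis unfolding q2[OF that] using n0 pn
      by (simp add: smult_diff_right)
  qed
  have q0: "q 0 = 1"
  proof -
    obtain a where a: "R 1 = [:a:]" using C_const[OF CR] degree_eq_zeroE by blast
    have "S' (R 1) = smult a (S' 1)" unfolding a using lin_smult[OF lS', of a 1]
      by (simp add: smult_one[symmetric] del: smult_one)
    then have "degree (S' (R 1)) = 0" using C_const[OF CS'] by simp
    then have "D (S' (R 1)) = 0" using D_zero_iff by blast
    then show ?thesis unfolding q_def Q'eq using SR by (simp add: monom_0 one_pCons[symmetric])
  qed
  have qrec: "Q (q n) = smult (psi_num psi n) (q (n-1))" if "n > 0" for n
  proof -
    have "Q (q n) = Q' ((R ^^ (n+1)) (Q (monom 1 n)))"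
      unfolding q_def by (simp only: C_comm[OF CQ CQ'] C_comm[OF CQ CRn])
    also have "Q (monom 1 n) = smult (psi_num psi n) (S (monom 1 (n-1)))"
      unfolding Qeq C_commD[OF CS, symmetric] Dmon lin_smult[OF lS] ..
    also have "(R ^^ (n+1)) (smult (psi_num psi n) (S (monom 1 (n-1)))) = smult (psi_num psi n) ((R^^n) (monom 1 (n-1)))"
      by (simp only: Suc_eq_plus1[symmetric] lin_smult[OF lRn] RnS)
    finally show ?thesis unfolding q_def using lin_smult[OF lQ'] that by simp
  qed
  have q00: "poly (q n) 0 = 0" if "n > 0" for n
    unfolding q3[OF that] by (simp add: poly_0_coeff_0 coeff_X)
  have ker: "r = 0" if "Q r = 0" "poly r 0 = 0" for r
  proof -
    have "degree (S r) = 0" using that(1) D_zero_iff Qeq by simp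
    then obtain a where a: "S r = [:a:]" using degree_eq_zeroE by blast
    obtain b where b: "R 1 = [:b:]" using C_const[OF CR] degree_eq_zeroE by blast
    have "r = R (smult a 1)" using RS[of r] a by simp
    also have "\<dots> = [:a * b:]" using lin_smult[OF lR, of a 1] b by simp
    finally have "r = [:a*b:]" .
    then show ?thesis using that(2) by simp
  qed
  have pq: "p n = q n" for n
  proof (induction n)
    case 0 then show ?case using bs q0 unfolding psi_basic_seq_def by simp
  next
    case (Suc n)
    have "Q (p (Suc n) - q (Suc n)) = 0"
      using bs qrec[of "Suc n"] Suc lin_diff[OF lQ] unfolding psi_basic_seq_def by simp
    moreover have "poly (p (Suc n) - q (Suc n)) 0 = 0"
      using bs q00[of "Suc n"] unfolding psi_basic_seq_def by simp
    ultimately show ?case using ker by fastforce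
  qed
  have bQ': "bij Q'"
  proof (rule C_bij[OF CQ'])
    have "degree (S' 1) = 0" using C_const[OF CS'] .
    then have "D (S' 1) = 0" using D_zero_iff by blast
    then have "Q' 1 = S 1" using Q'eq by simp
    moreover have "S 1 \<noteq> 0" using bS lin_zero[OF lS] by (metis bij_is_inj injD one_neq_zero)
    moreover obtain a where "S 1 = [:a:]" using C_const[OF CS] degree_eq_zeroE by blast
    ultimately show "coeff (Q' 1) 0 \<noteq> 0" by simp
  qed
  have inv4: "inv Q' (p (n-1)) = (R^^n) (monom 1 (n-1))" if "n > 0" for n
  proof -
    have "p (n-1) = Q' ((R^^n) (monom 1 (n-1)))" using pq[of "n-1"] that by (simp add: q_def)
    then show ?thesis using bQ' by (simp add: bij_is_inj)
  qed
  show ?thesis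
    unfolding R_def[symmetric] Q'_def[symmetric]
    using pq q2 q3 inv4 bQ' by (simp add: q_def)
qed

end

theorem theorem2p1:
  fixes psi :: "nat \<Rightarrow> 'a::field_char_0"
    and Q S :: "'a poly \<Rightarrow> 'a poly"
    and p :: "nat \<Rightarrow> 'a poly"
  assumes "admissible psi"
    and "psi_delta psi Q"
    and "psi_basic_seq psi Q p"
    and "S \<in> Sigma_psi psi" and "bij S"
    and "Q = psi_deriv psi \<circ> S"
  shows "(\<forall>n>0.
      p n = pincherle psi Q ((inv S ^^ (n + 1)) (monom 1 n)) \<and>
      p n = (inv S ^^ n) (monom 1 n)
            - smult (psi_num psi n / of_nat n) (pincherle psi (inv S ^^ n) (monom 1 (n - 1))) \<and>
      p n = smult (psi_num psi n / of_nat n) (xhat psi ((inv S ^^ n) (monom 1 (n - 1)))))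
    \<and> bij (pincherle psi Q)
    \<and> (\<forall>n>0. p n = smult (psi_num psi n / of_nat n)
                       (xhat psi (inv (pincherle psi Q) (p (n - 1)))))"
    using main[OF assms(1) assms(3) assms(4) assms(5) assms(6)] .

end
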